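(* Let $\alpha\in(0,1]$ and $\lambda\in\mathbb{C}$. There exists $0\ne\phi\in C^\infty[-1,1]$ solving \[ \Big(\lambda^2+\lambda-\frac{2\alpha\lambda}{1+\sqrt{1-\alpha}\,y}\Big)\phi+\Big(2\lambda+2-\frac{2\alpha}{1+\sqrt{1-\alpha}\,y}\Big)y\,\phi'+(y^2-1)\phi''=0 \] if and only if there exists $0\ne\phi\in C^\infty[-1,1]$ solving \[ (\lambda^2-\lambda)\phi+\big(2\lambda y+2\sqrt{1-\alpha}\big)\phi'+(y^2-1)\phi''=0. \] That is, the eigenvalues of $\mathbf{L}_\alpha$ coincide with the eigenvalues of $\mathbf{L}'_\alpha$.
   Context: $\lambda$ is called an eigenvalue of $\mathbf{L}_\alpha$ (the linearisation of $\partial_{tt}u-\partial_{xx}u=(\partial_tu)^2$ in self-similar variables around the solution $U_{\alpha,\infty,\kappa}(s,y)=\alpha s-\alpha\ln(1+\sqrt{1-\alpha}y)+\kappa$) if the first ODE has a nonzero $C^\infty[-1,1]$ solution, and an eigenvalue of $\mathbf{L}'_\alpha$ if the second ODE has a nonzero $C^\infty[-1,1]$ solution. *)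

theory Defs
  imports "HOL-Analysis.Analysis"
begin

text \<open>D is a tower of derivatives of a complex-valued function on the closed interval
  [-1,1]: D 0 agrees with the function there and D (Suc n) is the (one-sided at the
  endpoints) derivative of D n on [-1,1].  A function admitting such a tower is
  exactly a C-infinity function on [-1,1].\<close>
definition deriv_tower :: "(real \<Rightarrow> complex) \<Rightarrow> (nat \<Rightarrow> real \<Rightarrow> complex) \<Rightarrow> bool" where
  "deriv_tower \<phi> D \<longleftrightarrow>
     (\<forall>x\<in>{-1..1}. D 0 x = \<phi> x) \<and>
     (\<forall>n. \<forall>x\<in>{-1..1}. (D n has_vector_derivative D (Suc n) x) (at x within {-1..1}))"

definition smooth_on_cinterval :: "(real \<Rightarrow> complex) \<Rightarrow> bool" where
  "smooth_on_cinterval \<phi> \<longleftrightarrow> (\<exists>D. deriv_tower \<phi> D)"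

definition eigenvalue_L :: "real \<Rightarrow> complex \<Rightarrow> bool" where
  "eigenvalue_L \<alpha> \<mu> \<longleftrightarrow>
     (\<exists>\<phi> D. deriv_tower \<phi> D \<and> (\<exists>x\<in>{-1..1}. \<phi> x \<noteq> 0) \<and>
       (\<forall>y\<in>{-1..1}.
          (\<mu>^2 + \<mu> - 2 * of_real \<alpha> * \<mu> / of_real (1 + sqrt (1 - \<alpha>) * y)) * D 0 y
        + (2 * \<mu> + 2 - 2 * of_real \<alpha> / of_real (1 + sqrt (1 - \<alpha>) * y)) * of_real y * D 1 y
        + of_real (y^2 - 1) * D 2 y = 0))"

definition eigenvalue_L' :: "real \<Rightarrow> complex \<Rightarrow> bool" where
  "eigenvalue_L' \<alpha> \<mu> \<longleftrightarrow>
     (\<exists>\<phi> D. deriv_tower \<phi> D \<and> (\<exists>x\<in>{-1..1}. \<phi> x \<noteq> 0) \<and>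
       (\<forall>y\<in>{-1..1}.
          (\<mu>^2 - \<mu>) * D 0 y
        + (2 * \<mu> * of_real y + 2 * of_real (sqrt (1 - \<alpha>))) * D 1 y
        + of_real (y^2 - 1) * D 2 y = 0))"

end

theory Submission
  imports Defs
begin


fun Cn :: "nat \<Rightarrow> (real \<Rightarrow> 'a::real_normed_vector) \<Rightarrow> bool" where
  "Cn 0 f = True"
| "Cn (Suc n) f = (\<exists>f'. (\<forall>x\<in>{-1..1}. (f has_vector_derivative f' x) (at x within {-1..1})) \<and> Cn n f')"

lemma Cn_cong: "Cn n f \<Longrightarrow> (\<forall>x\<in>{-1..1}. f x = g x) \<Longrightarrow> Cn n g"
proof (induction n arbitrary: f g)
  case 0 then show ?case by simp
next
  case (Suc n)
  then obtain f' where d: "\<forall>x\<in>{-1..1}. (f has_vector_derivative f' x) (at x within {-1..1})" and c: "Cn n f'" by auto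
  have "\<forall>x\<in>{-1..1}. (g has_vector_derivative f' x) (at x within {-1..1})"
  proof
    fix x :: real assume x: "x \<in> {-1..1}"
    show "(g has_vector_derivative f' x) (at x within {-1..1})"
      by (rule has_vector_derivative_transform[OF x _ d[rule_format, OF x]]) (use Suc.prems in auto)
  qed
  then show ?case using c by auto
qed

lemma Cn_mono: "Cn (Suc n) f \<Longrightarrow> Cn n f"
proof (induction n arbitrary: f)
  case 0 then show ?case by simp
next
  case (Suc n)
  then obtain f' where d: "\<forall>x\<in>{-1..1}. (f has_vector_derivative f' x) (at x within {-1..1})" and c: "Cn (Suc n) f'"
    by (metis Cn.simps(2))
  then show ?case using Suc.IH[OF c] by auto
qed

lemma Cn_const: "Cn n (\<lambda>x. c)"
  by (induction n arbitrary: c) (auto intro!: exI[of _ "\<lambda>x. 0"])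

lemma Cn_id: "Cn n (\<lambda>x::real. x)"
  by (cases n) (auto intro!: exI[of _ "\<lambda>x. 1"] Cn_const)

lemma Cn_add: "Cn n f \<Longrightarrow> Cn n g \<Longrightarrow> Cn n (\<lambda>x. f x + g x)"
proof (induction n arbitrary: f g)
  case 0 then show ?case by simp
next
  case (Suc n)
  then obtain f' g' where "\<forall>x\<in>{-1..1}. (f has_vector_derivative f' x) (at x within {-1..1})" "Cn n f'"
     "\<forall>x\<in>{-1..1}. (g has_vector_derivative g' x) (at x within {-1..1})" "Cn n g'" by auto
  then show ?case using Suc.IH
    by (auto intro!: exI[of _ "\<lambda>x. f' x + g' x"] has_vector_derivative_add)
qed

lemma Cn_mult: "Cn n f \<Longrightarrow> Cn n g \<Longrightarrow> Cn n (\<lambda>x. f x * g x :: 'a::real_normed_algebra)"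
proof (induction n arbitrary: f g)
  case 0 then show ?case by simp
next
  case (Suc n)
  then obtain f' g' where d: "\<forall>x\<in>{-1..1}. (f has_vector_derivative f' x) (at x within {-1..1})" "Cn n f'"
     "\<forall>x\<in>{-1..1}. (g has_vector_derivative g' x) (at x within {-1..1})" "Cn n g'" by auto
  have "Cn n f" "Cn n g" using Suc.prems Cn_mono by blast+
  then have "Cn n (\<lambda>x. f x * g' x + f' x * g x)"
    using d by (intro Cn_add Suc.IH)
  then show ?case using d
    by (auto intro!: exI[of _ "\<lambda>x. f x * g' x + f' x * g x"] has_vector_derivative_mult)
qed

lemma Cn_inverse: "Cn n h \<Longrightarrow> (\<forall>x\<in>{-1..1}. h x \<noteq> 0) \<Longrightarrow> Cn n (\<lambda>x. inverse (h x :: real))"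
proof (induction n arbitrary: h)
  case 0 then show ?case by simp
next
  case (Suc n)
  then obtain h' where d: "\<forall>x\<in>{-1..1}. (h has_vector_derivative h' x) (at x within {-1..1})" "Cn n h'"
    by auto
  have ih: "Cn n (\<lambda>x. inverse (h x))" using Suc Cn_mono by blast
  have "Cn n (\<lambda>x. (-1) * (h' x * (inverse (h x) * inverse (h x))))"
    by (intro Cn_mult Cn_const d ih)
  moreover have "\<forall>x\<in>{-1..1}. ((\<lambda>x. inverse (h x)) has_vector_derivative (-1) * (h' x * (inverse (h x) * inverse (h x)))) (at x within {-1..1})"
  proof
    fix x :: real assume x: "x \<in> {-1..1}"
    have "((\<lambda>x. inverse (h x)) has_real_derivative (- (h' x * inverse(h x ^ Suc (Suc 0))))) (at x within {-1..1})"
      by (rule DERIV_inverse_fun) (use d x Suc.prems in \<open>auto simp: has_real_derivative_iff_has_vector_derivative\<close>)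
    then show "((\<lambda>x. inverse (h x)) has_vector_derivative (-1) * (h' x * (inverse (h x) * inverse (h x)))) (at x within {-1..1})"
      by (simp add: has_real_derivative_iff_has_vector_derivative power2_eq_square[symmetric] power_inverse)
  qed
  ultimately show ?case by auto
qed

lemma Cn_ln: "Cn n (h::real\<Rightarrow>real) \<Longrightarrow> (\<forall>x\<in>{-1..1}. h x > 0) \<Longrightarrow> Cn n (\<lambda>x. ln (h x))"
proof (cases n)
  case 0 then show ?thesis by simp
next
  case (Suc m)
  assume a: "Cn n h" "\<forall>x\<in>{-1..1}. h x > 0"
  then obtain h' where d: "\<forall>x\<in>{-1..1}. (h has_vector_derivative h' x) (at x within {-1..1})" "Cn m h'"
    using Suc by auto
  have "Cn m (\<lambda>x. h' x * inverse (h x))"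
    by (intro Cn_mult Cn_inverse d) (use a Suc Cn_mono in auto)
  moreover have "\<forall>x\<in>{-1..1}. ((\<lambda>x. ln (h x)) has_vector_derivative h' x * inverse (h x)) (at x within {-1..1})"
  proof
    fix x :: real assume x: "x \<in> {-1..1}"
    have "((\<lambda>x. ln (h x)) has_real_derivative (1 / h x * h' x)) (at x within {-1..1})"
      by (rule DERIV_chain2[OF DERIV_ln_divide]) (use d x a in \<open>auto simp: has_real_derivative_iff_has_vector_derivative\<close>)
    then show "((\<lambda>x. ln (h x)) has_vector_derivative h' x * inverse (h x)) (at x within {-1..1})"
      by (simp add: has_real_derivative_iff_has_vector_derivative field_simps)
  qed
  ultimately show ?thesis using Suc by auto
qed

lemma Cn_of_real: "Cn n (f::real\<Rightarrow>real) \<Longrightarrow> Cn n (\<lambda>x. complex_of_real (f x))"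
proof (induction n arbitrary: f)
  case 0 then show ?case by simp
next
  case (Suc n)
  then obtain f' where d: "\<forall>x\<in>{-1..1}. (f has_vector_derivative f' x) (at x within {-1..1})" "Cn n f'"
    by auto
  then show ?case using Suc.IH
    by (auto intro!: exI[of _ "\<lambda>x. complex_of_real (f' x)"] has_vector_derivative_of_real
         simp: has_real_derivative_iff_has_vector_derivative)
qed

lemma Cn_exp: "Cn n (k::real\<Rightarrow>complex) \<Longrightarrow> Cn n (\<lambda>x. exp (k x))"
proof (induction n arbitrary: k)
  case 0 then show ?case by simp
next
  case (Suc n)
  then obtain k' where d: "\<forall>x\<in>{-1..1}. (k has_vector_derivative k' x) (at x within {-1..1})" "Cn n k'"
    by auto
  have "Cn n (\<lambda>x. k' x * exp (k x))"
    by (intro Cn_mult d Suc.IH) (use Suc.prems Cn_mono in auto)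
  moreover have "\<forall>x\<in>{-1..1}. ((\<lambda>x. exp (k x)) has_vector_derivative k' x * exp (k x)) (at x within {-1..1})"
  proof
    fix x :: real assume x: "x \<in> {-1..1}"
    show "((\<lambda>x. exp (k x)) has_vector_derivative k' x * exp (k x)) (at x within {-1..1})"
      using field_vector_diff_chain_within[OF d(1)[rule_format, OF x], of exp "exp (k x)"]
      by (simp add: o_def has_field_derivative_at_within[OF DERIV_exp])
  qed
  ultimately show ?case by auto
qed

lemma Cn_compose: "Cn n (z::real\<Rightarrow>real) \<Longrightarrow> (\<forall>x\<in>{-1..1}. z x \<in> {-1..1}) \<Longrightarrow> Cn n (\<psi>::real\<Rightarrow>complex)
   \<Longrightarrow> Cn n (\<lambda>x. \<psi> (z x))"
proof (induction n arbitrary: \<psi> z)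
  case 0 then show ?case by simp
next
  case (Suc n)
  then obtain z' \<psi>' where d: "\<forall>x\<in>{-1..1}. (z has_vector_derivative z' x) (at x within {-1..1})" "Cn n z'"
    "\<forall>x\<in>{-1..1}. (\<psi> has_vector_derivative \<psi>' x) (at x within {-1..1})" "Cn n \<psi>'"
    by auto
  have "Cn n (\<lambda>x. complex_of_real (z' x) * \<psi>' (z x))"
    by (intro Cn_mult Cn_of_real d Suc.IH) (use Suc.prems Cn_mono d in auto)
  moreover have "\<forall>x\<in>{-1..1}. ((\<lambda>x. \<psi> (z x)) has_vector_derivative complex_of_real (z' x) * \<psi>' (z x)) (at x within {-1..1})"
  proof
    fix x :: real assume x: "x \<in> {-1..1}"
    have zi: "z ` {-1..1} \<subseteq> {-1..1}" using Suc.prems by auto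
    have "(\<psi> has_vector_derivative \<psi>' (z x)) (at (z x) within z ` {-1..1})"
      by (rule has_vector_derivative_within_subset[OF _ zi]) (use d x Suc.prems in auto)
    from vector_diff_chain_within[OF d(1)[rule_format, OF x] this]
    show "((\<lambda>x. \<psi> (z x)) has_vector_derivative complex_of_real (z' x) * \<psi>' (z x)) (at x within {-1..1})"
      by (simp add: o_def scaleR_conv_of_real)
  qed
  ultimately show ?case by auto
qed

lemma tower_Cn: "deriv_tower \<phi> D \<Longrightarrow> Cn n (D k)"
proof (induction n arbitrary: k)
  case 0 then show ?case by simp
next
  case (Suc n) then show ?case unfolding deriv_tower_def by (auto intro!: exI[of _ "D (Suc k)"])
qed

lemma vd_unique: "x \<in> {-1..1} \<Longrightarrow> (f has_vector_derivative a) (at x within {-1..1})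
  \<Longrightarrow> vector_derivative f (at x within {-1..1::real}) = a"
  using vector_derivative_within_cbox[of "-1" 1 x f a] by (simp add: cbox_interval)

lemma Cn_tower:
  fixes f :: "real \<Rightarrow> complex"
  assumes "\<forall>n. Cn n f"
  shows "\<exists>D. deriv_tower f D"
proof -
  define vd where "vd = (\<lambda>g::real\<Rightarrow>complex. \<lambda>x. vector_derivative g (at x within {-1..1::real}))"
  define D where "D = (\<lambda>n. (vd ^^ n) f)"
  have DS: "D (Suc n) = vd (D n)" for n by (simp add: D_def)
  have step: "Cn m (vd g)" if "Cn (Suc m) g" for m and g :: "real \<Rightarrow> complex"
  proof -
    from that obtain g' where "\<forall>x\<in>{-1..1}. (g has_vector_derivative g' x) (at x within {-1..1})" "Cn m g'"
      by auto
    then show ?thesis by (elim Cn_cong) (auto simp: vd_def vd_unique)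
  qed
  have all: "\<forall>m. Cn m (D n)" for n
  proof (induction n)
    case 0 then show ?case using assms by (simp add: D_def)
  next
    case (Suc n) then show ?case using step unfolding DS by blast
  qed
  have "(D n has_vector_derivative D (Suc n) x) (at x within {-1..1})" if "x \<in> {-1..1}" for n x
  proof -
    from all[of n] obtain g' where g: "\<forall>x\<in>{-1..1}. (D n has_vector_derivative g' x) (at x within {-1..1})"
      by (metis Cn.simps(2))
    then show ?thesis using that vd_unique[OF that g[rule_format, OF that]] by (simp add: DS vd_def)
  qed
  then show ?thesis unfolding deriv_tower_def by (auto simp: D_def intro!: exI[of _ D])
qed

lemma alg0:
  fixes B Y W \<mu> G P0 P1 P2 :: complex
  assumes W: "W \<noteq> 0" and Wd: "W = 1 + B*Y"
  shows "(\<mu>^2 + \<mu> - 2 * (1 - B^2) * \<mu> / W) * (G * P0)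
     + (2*\<mu> + 2 - 2*(1 - B^2)/W) * Y *
        (-\<mu> * (B/W) * G * P0 + G * ((1-B^2)/W^2) * P1)
     + (Y^2 - 1) * (-\<mu> * (-(B^2)/W^2) * G * P0 + (-\<mu> * (B/W)) * (-\<mu> * (B/W) * G) * P0
         + (-\<mu> * (B/W)) * G * ((1-B^2)/W^2) * P1
         + (-\<mu> * (B/W) * G) * ((1-B^2)/W^2) * P1
         + G * (-2*B*(1-B^2)/W^3) * P1 + G * ((1-B^2)/W^2) * ((1-B^2)/W^2) * P2)
   = G * ((1-B^2)/W^2) * ((\<mu>^2 - \<mu>) * P0 + (2*\<mu>*((Y+B)/W) + 2*B) * P1
        + (((Y+B)/W)^2 - 1) * P2)"
  using W apply (simp add: field_simps)
  unfolding Wd by algebra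

definition Gf :: "complex \<Rightarrow> real \<Rightarrow> real \<Rightarrow> complex" where
  "Gf \<mu> b y = exp (- \<mu> * complex_of_real (ln (1 + b * y)))"
definition Zf :: "real \<Rightarrow> real \<Rightarrow> real" where
  "Zf b y = (y + b) / (1 + b * y)"

lemma w_pos: "0 \<le> b \<Longrightarrow> b < 1 \<Longrightarrow> y \<in> {-1..1} \<Longrightarrow> 1 + b * y > (0::real)"
proof -
  assume "0 \<le> b" "b < 1" "y \<in> {-1..1}"
  then have "b * y \<ge> -b" by (auto intro: mult_left_mono[of "-1" y b, simplified])
  then show ?thesis using \<open>b < 1\<close> by linarith
qed

lemma core:
  fixes b y :: real and \<mu> :: complex
  assumes b: "0 \<le> b" "b < 1" and y: "y \<in> {-1..1}"
    and t\<psi>: "deriv_tower \<psi> D\<psi>" and t\<phi>: "deriv_tower \<phi> D\<phi>"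
    and Zin: "\<forall>t\<in>{-1..1}. Zf b t \<in> {-1..1}"
    and eq: "\<forall>t\<in>{-1..1}. D\<phi> 0 t = Gf \<mu> b t * D\<psi> 0 (Zf b t)"
  shows "(\<mu>^2 + \<mu> - 2 * of_real (1-b^2) * \<mu> / of_real (1 + b * y)) * D\<phi> 0 y
     + (2*\<mu> + 2 - 2* of_real(1-b^2)/of_real(1+b*y)) * of_real y * D\<phi> 1 y
     + of_real (y^2-1) * D\<phi> 2 y
   = Gf \<mu> b y * of_real ((1-b^2)/(1+b*y)^2) * ((\<mu>^2 - \<mu>) * D\<psi> 0 (Zf b y)
       + (2*\<mu>* of_real (Zf b y) + 2* of_real b) * D\<psi> 1 (Zf b y) + of_real ((Zf b y)^2 - 1) * D\<psi> 2 (Zf b y))"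
proof -
  let ?I = "{-1..1::real}"
  define A where "A t = complex_of_real (b / (1 + b*t))" for t
  define A' where "A' t = complex_of_real (-(b^2) / (1 + b*t)^2)" for t
  define Z1 where "Z1 t = complex_of_real ((1-b^2) / (1 + b*t)^2)" for t
  define Z1' where "Z1' t = complex_of_real (-2*b*(1-b^2) / (1 + b*t)^3)" for t
  define P where "P k t = D\<psi> k (Zf b t)" for k t
  define G where "G t = Gf \<mu> b t" for t
  define \<phi>1 where "\<phi>1 t = -\<mu> * A t * G t * P 0 t + G t * Z1 t * P 1 t" for t
  define \<phi>2 where "\<phi>2 t = -\<mu> * A' t * G t * P 0 t + (-\<mu> * A t) * (-\<mu> * A t * G t) * P 0 t
         + (-\<mu> * A t) * G t * Z1 t * P 1 t
         + (-\<mu> * A t * G t) * Z1 t * P 1 t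
         + G t * Z1' t * P 1 t + G t * Z1 t * Z1 t * P 2 t" for t
  have wp: "1 + b * t > 0" if "t \<in> ?I" for t using w_pos[OF b that] .
  have hZ: "(Zf b has_vector_derivative (1-b^2)/(1+b*t)^2) (at t within ?I)" if t: "t \<in> ?I" for t
  proof -
    have "(Zf b has_real_derivative (1-b^2)/(1+b*t)^2) (at t within ?I)"
      unfolding Zf_def[abs_def]
      by (rule derivative_eq_intros refl | use wp[OF t] in force)+
        (use wp[OF t] in \<open>simp add: field_simps power2_eq_square\<close>)
    then show ?thesis by (simp add: has_real_derivative_iff_has_vector_derivative)
  qed
  have hP: "((\<lambda>t. P k t) has_vector_derivative Z1 t * P (Suc k) t) (at t within ?I)" if t: "t \<in> ?I" for k t
  proof -
    have zi: "Zf b ` ?I \<subseteq> ?I" using Zin by auto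
    have "(D\<psi> k has_vector_derivative D\<psi> (Suc k) (Zf b t)) (at (Zf b t) within Zf b ` ?I)"
      by (rule has_vector_derivative_within_subset[OF _ zi]) (use t\<psi> Zin t in \<open>auto simp: deriv_tower_def\<close>)
    from vector_diff_chain_within[OF hZ[OF t] this]
    show ?thesis by (simp add: o_def scaleR_conv_of_real P_def Z1_def)
  qed
  have hA: "(A has_vector_derivative A' t) (at t within ?I)" if t: "t \<in> ?I" for t
  proof -
    have "((\<lambda>t. b / (1 + b*t)) has_real_derivative (-(b^2) / (1 + b*t)^2)) (at t within ?I)"
      by (rule derivative_eq_intros refl | use wp[OF t] in force)+
        (use wp[OF t] in \<open>simp add: field_simps power2_eq_square\<close>)
    then show ?thesis unfolding A_def[abs_def] A'_def by (rule has_vector_derivative_of_real)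
  qed
  have hZ1: "(Z1 has_vector_derivative Z1' t) (at t within ?I)" if t: "t \<in> ?I" for t
  proof -
    have "((\<lambda>t. (1-b^2) / (1 + b*t)^2) has_real_derivative (-2*b*(1-b^2) / (1 + b*t)^3)) (at t within ?I)"
      by (rule derivative_eq_intros refl | use wp[OF t] in force)+
        (use wp[OF t] in \<open>simp add: divide_simps eval_nat_numeral; algebra\<close>)
    then show ?thesis unfolding Z1_def[abs_def] Z1'_def by (rule has_vector_derivative_of_real)
  qed
  have hG: "(G has_vector_derivative (-\<mu> * A t * G t)) (at t within ?I)" if t: "t \<in> ?I" for t
  proof -
    have "((\<lambda>t. ln (1 + b*t)) has_real_derivative (b / (1 + b*t))) (at t within ?I)"
      by (rule derivative_eq_intros refl | use wp[OF t] in force)+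
    then have "((\<lambda>t. - \<mu> * complex_of_real (ln (1 + b * t))) has_vector_derivative -\<mu> * A t) (at t within ?I)"
      unfolding A_def by (intro has_vector_derivative_mult_right has_vector_derivative_of_real)
    from field_vector_diff_chain_within[OF this, of exp "exp (- \<mu> * complex_of_real (ln (1 + b * t)))"]
    show ?thesis by (simp add: o_def has_field_derivative_at_within[OF DERIV_exp] G_def[abs_def] Gf_def[abs_def])
  qed
  have d0: "((\<lambda>t. G t * P 0 t) has_vector_derivative \<phi>1 t) (at t within ?I)" if t: "t \<in> ?I" for t
    by (rule has_vector_derivative_eq_rhs, rule has_vector_derivative_mult[OF hG[OF t] hP[OF t]])
       (simp add: \<phi>1_def algebra_simps)
  have d1: "(\<phi>1 has_vector_derivative \<phi>2 t) (at t within ?I)" if t: "t \<in> ?I" for t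
    unfolding \<phi>1_def[abs_def]
    by (rule has_vector_derivative_eq_rhs,
        rule has_vector_derivative_add[OF
          has_vector_derivative_mult[OF has_vector_derivative_mult[OF
             has_vector_derivative_mult[OF has_vector_derivative_const hA[OF t]] hG[OF t]] hP[OF t]]
          has_vector_derivative_mult[OF has_vector_derivative_mult[OF hG[OF t] hZ1[OF t]] hP[OF t]]])
       (simp add: \<phi>2_def algebra_simps numeral_2_eq_2)
  have e1: "D\<phi> 1 t = \<phi>1 t" if t: "t \<in> ?I" for t
  proof -
    have "(D\<phi> 0 has_vector_derivative D\<phi> 1 t) (at t within ?I)" using t\<phi> t by (auto simp: deriv_tower_def)
    moreover have "(D\<phi> 0 has_vector_derivative \<phi>1 t) (at t within ?I)"
      by (rule has_vector_derivative_transform[OF t _ d0[OF t]]) (use eq in \<open>auto simp: G_def P_def\<close>)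
    ultimately show ?thesis using vd_unique[OF t] by metis
  qed
  have e2: "D\<phi> 2 y = \<phi>2 y"
  proof -
    have "(D\<phi> 1 has_vector_derivative D\<phi> 2 y) (at y within ?I)" using t\<phi> y
      unfolding deriv_tower_def by (metis numeral_2_eq_2 One_nat_def)
    moreover have "(D\<phi> 1 has_vector_derivative \<phi>2 y) (at y within ?I)"
      by (rule has_vector_derivative_transform[OF y _ d1[OF y]]) (use e1 in auto)
    ultimately show ?thesis using vd_unique[OF y] by metis
  qed
  have e0: "D\<phi> 0 y = G y * P 0 y" using eq y by (auto simp: G_def P_def)
  have "complex_of_real (1 + b*y) \<noteq> 0" using wp[OF y] by (simp only: of_real_eq_0_iff)
  then have W: "1 + complex_of_real b * complex_of_real y \<noteq> 0" by simp
  show ?thesis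
    unfolding e0 e1[OF y] e2 \<phi>1_def \<phi>2_def
    using alg0[OF W refl, of \<mu> "G y" "P 0 y" "P 1 y" "P 2 y"]
    by (simp add: A_def A'_def Z1_def Z1'_def G_def P_def Zf_def)
qed


definition Yf :: "real \<Rightarrow> real \<Rightarrow> real" where
  "Yf b x = (x - b) / (1 - b * x)"
definition Hf :: "complex \<Rightarrow> real \<Rightarrow> real \<Rightarrow> complex" where
  "Hf \<mu> b x = exp (\<mu> * complex_of_real (ln (1 + b * Yf b x)))"

lemma w_pos': "0 \<le> b \<Longrightarrow> b < 1 \<Longrightarrow> x \<in> {-1..1} \<Longrightarrow> 1 - b * x > (0::real)"
  using w_pos[of b "-x"] by auto

lemma Z_in: assumes "0 \<le> b" "b < 1" "y \<in> {-1..1}" shows "Zf b y \<in> {-1..1}"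
proof -
  have w: "1 + b*y > 0" using w_pos assms by blast
  have "(1-b)*(1-y) \<ge> 0" "(1+b)*(1+y) \<ge> 0" using assms by auto
  then have "y + b \<le> 1 + b*y" "-(1+b*y) \<le> y + b" by (auto simp: algebra_simps)
  then show ?thesis using w by (auto simp: Zf_def field_simps)
qed

lemma Y_in: assumes "0 \<le> b" "b < 1" "x \<in> {-1..1}" shows "Yf b x \<in> {-1..1}"
proof -
  have w: "1 - b*x > 0" using w_pos' assms by blast
  have "(1+b)*(1-x) \<ge> 0" "(1-b)*(1+x) \<ge> 0" using assms by auto
  then have "x - b \<le> 1 - b*x" "-(1-b*x) \<le> x - b" by (auto simp: algebra_simps)
  then show ?thesis using w by (auto simp: Yf_def field_simps)
qed

lemma ZY: assumes "0 \<le> b" "b < 1" "x \<in> {-1..1}" shows "Zf b (Yf b x) = x"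
proof -
  have w: "1 - b*x \<noteq> 0" using w_pos' assms by force
  have b2: "1 - b^2 \<noteq> 0" using assms by (smt (verit) power2_eq_square mult_left_le_one_le)
  have e1: "Yf b x + b = x*(1-b^2)/(1-b*x)" using w
    by (simp add: Yf_def field_simps power2_eq_square)
  have e2: "1 + b * Yf b x = (1-b^2)/(1-b*x)" using w
    by (simp add: Yf_def field_simps power2_eq_square)
  show ?thesis unfolding Zf_def e1 e2 using w b2 by simp
qed

lemma YZ: assumes "0 \<le> b" "b < 1" "y \<in> {-1..1}" shows "Yf b (Zf b y) = y"
proof -
  have w: "1 + b*y \<noteq> 0" using w_pos assms by force
  have b2: "1 - b^2 \<noteq> 0" using assms by (smt (verit) power2_eq_square mult_left_le_one_le)
  have e1: "Zf b y - b = y*(1-b^2)/(1+b*y)" using w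
    by (simp add: Zf_def field_simps power2_eq_square)
  have e2: "1 - b * Zf b y = (1-b^2)/(1+b*y)" using w
    by (simp add: Zf_def field_simps power2_eq_square)
  show ?thesis unfolding Yf_def e1 e2 using w b2 by simp
qed

lemma Cn_lin: "Cn n (\<lambda>x::real. c + d * x)"
  by (intro Cn_add Cn_const Cn_mult Cn_id)

lemma Cn_Z: assumes "0 \<le> b" "b < 1" shows "Cn n (Zf b)"
proof -
  have "Cn n (\<lambda>y. (b + 1 * y) * inverse (1 + b * y))"
    by (intro Cn_mult Cn_lin Cn_inverse) (use w_pos[OF assms] in force)
  then show ?thesis by (rule Cn_cong) (auto simp: Zf_def field_simps)
qed

lemma Cn_Y: assumes "0 \<le> b" "b < 1" shows "Cn n (Yf b)"
proof -
  have "Cn n (\<lambda>y. (-b + 1 * y) * inverse (1 + (-b) * y))"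
    by (intro Cn_mult Cn_lin Cn_inverse) (use w_pos'[OF assms] in force)
  then show ?thesis by (rule Cn_cong) (auto simp: Yf_def field_simps)
qed

lemma Cn_G: assumes "0 \<le> b" "b < 1" shows "Cn n (Gf \<mu> b)"
  unfolding Gf_def
  by (intro Cn_exp Cn_mult Cn_const Cn_of_real Cn_ln Cn_lin) (use w_pos[OF assms] in force)

lemma Cn_H: assumes "0 \<le> b" "b < 1" shows "Cn n (Hf \<mu> b)"
  unfolding Hf_def
  by (intro Cn_exp Cn_mult Cn_const Cn_of_real Cn_ln Cn_add Cn_Y[OF assms])
     (use w_pos[OF assms] Y_in[OF assms] in force)

lemma GH: assumes "0 \<le> b" "b < 1" "y \<in> {-1..1}" shows "Gf \<mu> b y * Hf \<mu> b (Zf b y) = 1"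
  unfolding Gf_def Hf_def YZ[OF assms] by (simp add: exp_add[symmetric])

theorem corollary3p1:
  fixes \<alpha> :: real and \<mu> :: complex
  assumes "0 < \<alpha>" and "\<alpha> \<le> 1"
  shows "eigenvalue_L \<alpha> \<mu> \<longleftrightarrow> eigenvalue_L' \<alpha> \<mu>"
proof -
  obtain b where bd: "b = sqrt (1 - \<alpha>)" by blast
  have b0: "0 \<le> b" using assms bd by simp
  have b1: "b < 1" using assms bd by simp
  have ab: "\<alpha> = 1 - b^2" using assms bd by simp
  let ?I = "{-1..1::real}"
  let ?L1 = "\<lambda>D y. (\<mu>^2 + \<mu> - 2 * of_real (1-b^2) * \<mu> / of_real (1 + b * y)) * D 0 y
     + (2*\<mu> + 2 - 2 * of_real(1-b^2)/of_real(1+b*y)) * of_real y * D 1 y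
     + of_real (y^2-1) * D 2 y"
  let ?L2 = "\<lambda>D y. (\<mu>^2 - \<mu>) * D 0 y
        + (2 * \<mu> * of_real y + 2 * of_real b) * D 1 y
        + of_real (y^2 - 1) * D 2 y"
  have EL: "eigenvalue_L \<alpha> \<mu> \<longleftrightarrow> (\<exists>\<phi> D. deriv_tower \<phi> D \<and> (\<exists>x\<in>?I. \<phi> x \<noteq> 0) \<and> (\<forall>y\<in>?I. ?L1 D y = 0))"
    unfolding eigenvalue_L_def bd[symmetric] unfolding ab ..
  have EL': "eigenvalue_L' \<alpha> \<mu> \<longleftrightarrow> (\<exists>\<phi> D. deriv_tower \<phi> D \<and> (\<exists>x\<in>?I. \<phi> x \<noteq> 0) \<and> (\<forall>y\<in>?I. ?L2 D y = 0))"
    unfolding eigenvalue_L'_def bd[symmetric] ..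
  have Zin: "\<forall>t\<in>?I. Zf b t \<in> ?I" using Z_in[OF b0 b1] by blast
  have Gnz: "Gf \<mu> b y \<noteq> 0" for y by (simp add: Gf_def)
  have Hnz: "Hf \<mu> b y \<noteq> 0" for y by (simp add: Hf_def)
  show ?thesis
  proof
    assume "eigenvalue_L \<alpha> \<mu>"
    then obtain \<phi> D\<phi> y0 where t\<phi>: "deriv_tower \<phi> D\<phi>" and y0: "y0 \<in> ?I" "\<phi> y0 \<noteq> 0"
      and ode: "\<forall>y\<in>?I. ?L1 D\<phi> y = 0" unfolding EL by blast
    define \<psi> where "\<psi> x = Hf \<mu> b x * D\<phi> 0 (Yf b x)" for x
    have "\<forall>n. Cn n \<psi>"
      unfolding \<psi>_def[abs_def]
      using Y_in[OF b0 b1] by (intro allI Cn_mult[OF Cn_H[OF b0 b1] Cn_compose[OF Cn_Y[OF b0 b1] _ tower_Cn[OF t\<phi>]]]) blast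
    then obtain D\<psi> where t\<psi>: "deriv_tower \<psi> D\<psi>" using Cn_tower by blast
    have eq: "\<forall>t\<in>?I. D\<phi> 0 t = Gf \<mu> b t * D\<psi> 0 (Zf b t)"
    proof
      fix t assume t: "t \<in> ?I"
      have "D\<psi> 0 (Zf b t) = Hf \<mu> b (Zf b t) * D\<phi> 0 t"
        using t\<psi> Zin t YZ[OF b0 b1 t] by (auto simp: deriv_tower_def \<psi>_def)
      then show "D\<phi> 0 t = Gf \<mu> b t * D\<psi> 0 (Zf b t)"
        using GH[OF b0 b1 t, of \<mu>] by (simp add: mult.assoc[symmetric])
    qed
    show "eigenvalue_L' \<alpha> \<mu>" unfolding EL'
    proof (intro exI conjI)
      show "deriv_tower \<psi> D\<psi>" by fact
      show "\<exists>x\<in>?I. \<psi> x \<noteq> 0"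
      proof (intro bexI)
        show "\<psi> (Zf b y0) \<noteq> 0"
          using YZ[OF b0 b1 y0(1)] y0 t\<phi> Hnz by (auto simp: \<psi>_def deriv_tower_def)
      qed (use Zin y0 in blast)
      show "\<forall>x\<in>?I. ?L2 D\<psi> x = 0"
      proof
        fix x assume x: "x \<in> ?I"
        define y where "y = Yf b x"
        have y: "y \<in> ?I" and zy: "Zf b y = x" using Y_in[OF b0 b1 x] ZY[OF b0 b1 x] by (auto simp: y_def)
        have c: "?L1 D\<phi> y = Gf \<mu> b y * of_real ((1-b^2)/(1+b*y)^2) * ?L2 D\<psi> x"
          using core[OF b0 b1 y t\<psi> t\<phi> Zin eq] unfolding zy .
        have "(1-b^2)/(1+b*y)^2 \<noteq> 0" using ab assms w_pos[OF b0 b1 y] by simp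
        then have q: "complex_of_real ((1-b^2)/(1+b*y)^2) \<noteq> 0" by (metis of_real_eq_0_iff)
        have "Gf \<mu> b y * of_real ((1-b^2)/(1+b*y)^2) * ?L2 D\<psi> x = 0"
          using ode[rule_format, OF y] unfolding c .
        then show "?L2 D\<psi> x = 0" using q Gnz[of y] by (metis mult_eq_0_iff)
      qed
    qed
  next
    assume "eigenvalue_L' \<alpha> \<mu>"
    then obtain \<psi> D\<psi> x0 where t\<psi>: "deriv_tower \<psi> D\<psi>" and x0: "x0 \<in> ?I" "\<psi> x0 \<noteq> 0"
      and ode: "\<forall>y\<in>?I. ?L2 D\<psi> y = 0" unfolding EL' by blast
    define \<phi> where "\<phi> y = Gf \<mu> b y * D\<psi> 0 (Zf b y)" for y
    have "\<forall>n. Cn n \<phi>"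
      unfolding \<phi>_def[abs_def]
      using Zin by (intro allI Cn_mult[OF Cn_G[OF b0 b1] Cn_compose[OF Cn_Z[OF b0 b1] _ tower_Cn[OF t\<psi>]]]) blast
    then obtain D\<phi> where t\<phi>: "deriv_tower \<phi> D\<phi>" using Cn_tower by blast
    have eq: "\<forall>t\<in>?I. D\<phi> 0 t = Gf \<mu> b t * D\<psi> 0 (Zf b t)"
      using t\<phi> by (auto simp: deriv_tower_def \<phi>_def)
    show "eigenvalue_L \<alpha> \<mu>" unfolding EL
    proof (intro exI conjI)
      show "deriv_tower \<phi> D\<phi>" by fact
      show "\<exists>x\<in>?I. \<phi> x \<noteq> 0"
      proof (intro bexI)
        show "\<phi> (Yf b x0) \<noteq> 0"
          using ZY[OF b0 b1 x0(1)] x0 t\<psi> Gnz by (auto simp: \<phi>_def deriv_tower_def)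
      qed (use Y_in[OF b0 b1] x0 in blast)
      show "\<forall>y\<in>?I. ?L1 D\<phi> y = 0"
      proof
        fix y assume y: "y \<in> ?I"
        have "?L1 D\<phi> y = Gf \<mu> b y * of_real ((1-b^2)/(1+b*y)^2) * ?L2 D\<psi> (Zf b y)"
          using core[OF b0 b1 y t\<psi> t\<phi> Zin eq] .
        then show "?L1 D\<phi> y = 0" using ode Zin y by simp
      qed
    qed
  qed
qed

end
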